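(* Let $A,B,C$ be the observed variables of the Triangle scenario, each taking values in $\{0,1\}$. Every distribution $P_{ABC}$ compatible with the Triangle scenario satisfies $$P_A(1)P_B(1)P_C(1)\le P_{AB}(11)P_C(1)+P_{BC}(11)P_A(1)+P_{AC}(11)P_B(1)+P_{ABC}(000),$$ where $P_A,P_B,P_C,P_{AB},P_{BC},P_{AC}$ are the marginals of $P_{ABC}$.
   Context: The Triangle scenario is the causal structure with observed nodes $A,B,C$, latent nodes $X,Y,Z$ and edges $X\to A$, $X\to B$, $Y\to A$, $Y\to C$, $Z\to B$, $Z\to C$. A distribution $P_{ABC}$ is compatible with it if there exist distributions $P_X,P_Y,P_Z$ (latent variables of arbitrary cardinality) and conditionals $P_{A|XY},P_{B|XZ},P_{C|YZ}$ such that $P_{ABC}$ is the marginal of $P_XP_YP_ZP_{A|XY}P_{B|XZ}P_{C|YZ}$. *)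

theory Defs
  imports "HOL-Probability.Probability"
begin

text \<open>Binary outcomes are encoded as bool (True = 1, False = 0).
  A response kernel for a binary variable given latent values is described by
  q = probability of outcome 1; kern q v = P(outcome = v).\<close>

definition kern :: "real \<Rightarrow> bool \<Rightarrow> real" where
  "kern q v = (if v then q else 1 - q)"

text \<open>A triangle model for P with latent probability spaces MX, MY, MZ
  (arbitrary measurable spaces, hence arbitrary cardinality) and conditionals
  qA (A given X,Y), qB (B given X,Z), qC (C given Y,Z).\<close>

definition triangle_model ::
  "(bool \<Rightarrow> bool \<Rightarrow> bool \<Rightarrow> real) \<Rightarrow> 'x measure \<Rightarrow> 'y measure \<Rightarrow> 'z measure \<Rightarrow>
   ('x \<Rightarrow> 'y \<Rightarrow> real) \<Rightarrow> ('x \<Rightarrow> 'z \<Rightarrow> real) \<Rightarrow> ('y \<Rightarrow> 'z \<Rightarrow> real) \<Rightarrow> bool" where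
  "triangle_model P MX MY MZ qA qB qC \<longleftrightarrow>
     prob_space MX \<and> prob_space MY \<and> prob_space MZ \<and>
     (\<lambda>(x,y). qA x y) \<in> borel_measurable (MX \<Otimes>\<^sub>M MY) \<and>
     (\<lambda>(x,z). qB x z) \<in> borel_measurable (MX \<Otimes>\<^sub>M MZ) \<and>
     (\<lambda>(y,z). qC y z) \<in> borel_measurable (MY \<Otimes>\<^sub>M MZ) \<and>
     (\<forall>x\<in>space MX. \<forall>y\<in>space MY. 0 \<le> qA x y \<and> qA x y \<le> 1) \<and>
     (\<forall>x\<in>space MX. \<forall>z\<in>space MZ. 0 \<le> qB x z \<and> qB x z \<le> 1) \<and>
     (\<forall>y\<in>space MY. \<forall>z\<in>space MZ. 0 \<le> qC y z \<and> qC y z \<le> 1) \<and>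
     (\<forall>a b c. P a b c =
        (\<integral>w. kern (qA (fst w) (fst (snd w))) a * kern (qB (fst w) (snd (snd w))) b
                 * kern (qC (fst (snd w)) (snd (snd w))) c
          \<partial>(MX \<Otimes>\<^sub>M (MY \<Otimes>\<^sub>M MZ))))"

end

theory Submission
  imports Defs
begin

lemma key_ineq:
  fixes p q r u s w :: real
  assumes "0\<le>p" "p\<le>1" "0\<le>q" "q\<le>1" "0\<le>r" "r\<le>1" "0\<le>u" "u\<le>1" "0\<le>s" "s\<le>1" "0\<le>w" "w\<le>1"
  shows "p * q * r \<le> p * s * r + p * q * w + u * q * r + (1-u) * (1-s) * (1-w)"
proof -
  define t where "t = p * q * r"
  have t0: "0 \<le> t" "t \<le> 1" using assms unfolding t_def by (auto intro: mult_le_one mult_nonneg_nonneg)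
  have "p * s * r \<ge> t * s" proof -
    have "t * s = (p * s * r) * q" unfolding t_def by (simp add: algebra_simps)
    also have "\<dots> \<le> p * s * r" by (rule mult_left_le) (use assms in auto)
    finally show ?thesis .
  qed
  moreover have "p * q * w \<ge> t * w" proof -
    have "t * w = (p * q * w) * r" unfolding t_def by (simp add: algebra_simps)
    also have "\<dots> \<le> p * q * w" by (rule mult_left_le) (use assms in auto)
    finally show ?thesis .
  qed
  moreover have "u * q * r \<ge> t * u" proof -
    have "t * u = (u * q * r) * p" unfolding t_def by (simp add: algebra_simps)
    also have "\<dots> \<le> u * q * r" by (rule mult_left_le) (use assms in auto)
    finally show ?thesis .
  qed
  moreover have "t \<le> t * (u+s+w) + (1-u) * (1-s) * (1-w)"
  proof (cases "u+s+w \<ge> 1")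
    case True
    have "t * 1 \<le> t * (u+s+w)" by (rule mult_left_mono) (use True t0 in auto)
    moreover have "0 \<le> (1-u) * (1-s) * (1-w)" using assms by auto
    ultimately show ?thesis by simp
  next
    case False
    have "u * s * w \<le> u * s" by (rule mult_left_le) (use assms in auto)
    moreover have "0 \<le> u * w" "0 \<le> s * w" using assms by auto
    ultimately have "(1-u) * (1-s) * (1-w) \<ge> 1-u-s-w" by (simp add: algebra_simps)
    moreover have "t * (1-u-s-w) \<le> 1-u-s-w" using t0 False by (simp add: mult_left_le_one_le)
    ultimately show ?thesis by (simp add: algebra_simps)
  qed
  ultimately show ?thesis unfolding t_def by (simp add: algebra_simps)
qed
lemma iter_lemmas:
  fixes F :: "'x \<times> 'y \<times> 'z \<Rightarrow> real"
  assumes X: "prob_space MX" and Y: "prob_space MY" and Z: "prob_space MZ"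
    and F[measurable]: "F \<in> borel_measurable (MX \<Otimes>\<^sub>M (MY \<Otimes>\<^sub>M MZ))"
    and bnd: "\<And>w. w \<in> space (MX \<Otimes>\<^sub>M (MY \<Otimes>\<^sub>M MZ)) \<Longrightarrow> \<bar>F w\<bar> \<le> B"
  shows "integrable (MX \<Otimes>\<^sub>M (MY \<Otimes>\<^sub>M MZ)) F"
    and "integral\<^sup>L (MX \<Otimes>\<^sub>M (MY \<Otimes>\<^sub>M MZ)) F = (\<integral>x. \<integral>y. \<integral>z. F (x,(y,z)) \<partial>MZ \<partial>MY \<partial>MX)"
    and "integral\<^sup>L (MX \<Otimes>\<^sub>M (MY \<Otimes>\<^sub>M MZ)) F = (\<integral>y. \<integral>z. \<integral>x. F (x,(y,z)) \<partial>MX \<partial>MZ \<partial>MY)"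
proof -
  interpret X: prob_space MX by fact
  interpret Y: prob_space MY by fact
  interpret Z: prob_space MZ by fact
  interpret YZ: pair_prob_space MY MZ by unfold_locales
  interpret XYZ: pair_prob_space MX "MY \<Otimes>\<^sub>M MZ" by unfold_locales
  show int: "integrable (MX \<Otimes>\<^sub>M (MY \<Otimes>\<^sub>M MZ)) F"
    by (rule XYZ.integrable_const_bound[where B=B]) (use bnd in auto)
  have "integral\<^sup>L (MX \<Otimes>\<^sub>M (MY \<Otimes>\<^sub>M MZ)) F = (\<integral>x. \<integral>p. F (x,p) \<partial>(MY \<Otimes>\<^sub>M MZ) \<partial>MX)"
    by (rule XYZ.integral_fst'[OF int, symmetric])
  also have "\<dots> = (\<integral>x. \<integral>y. \<integral>z. F (x,(y,z)) \<partial>MZ \<partial>MY \<partial>MX)"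
  proof (rule Bochner_Integration.integral_cong[OF refl])
    fix x assume x: "x \<in> space MX"
    have "integrable (MY \<Otimes>\<^sub>M MZ) (\<lambda>p. F (x,p))"
      by (rule YZ.integrable_const_bound[where B=B]) (use bnd x in \<open>auto simp: space_pair_measure\<close>)
    then show "(\<integral>p. F (x,p) \<partial>(MY \<Otimes>\<^sub>M MZ)) = (\<integral>y. \<integral>z. F (x,(y,z)) \<partial>MZ \<partial>MY)"
      by (rule YZ.integral_fst'[symmetric])
  qed
  finally show "integral\<^sup>L (MX \<Otimes>\<^sub>M (MY \<Otimes>\<^sub>M MZ)) F = (\<integral>x. \<integral>y. \<integral>z. F (x,(y,z)) \<partial>MZ \<partial>MY \<partial>MX)" .
  have int': "integrable (MX \<Otimes>\<^sub>M (MY \<Otimes>\<^sub>M MZ)) (case_prod (\<lambda>x p. F (x,p)))"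
    using int by simp
  have "integral\<^sup>L (MX \<Otimes>\<^sub>M (MY \<Otimes>\<^sub>M MZ)) F = (\<integral>p. \<integral>x. F (x,p) \<partial>MX \<partial>(MY \<Otimes>\<^sub>M MZ))"
    using XYZ.integral_snd[OF int'] by simp
  also have "\<dots> = (\<integral>y. \<integral>z. \<integral>x. F (x,(y,z)) \<partial>MX \<partial>MZ \<partial>MY)"
    using YZ.integral_fst'[OF XYZ.integrable_snd[OF int']] by simp
  finally show "integral\<^sup>L (MX \<Otimes>\<^sub>M (MY \<Otimes>\<^sub>M MZ)) F = (\<integral>y. \<integral>z. \<integral>x. F (x,(y,z)) \<partial>MX \<partial>MZ \<partial>MY)" .
qed

lemma sect1:
  assumes "(\<lambda>(x,y). f x y) \<in> borel_measurable (M1 \<Otimes>\<^sub>M M2)" "x \<in> space M1"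
  shows "(\<lambda>y. f x y :: real) \<in> borel_measurable M2"
  using measurable_compose[OF measurable_Pair1'[OF assms(2)] assms(1)] by simp

lemma sect2:
  assumes "(\<lambda>(x,y). f x y) \<in> borel_measurable (M1 \<Otimes>\<^sub>M M2)" "y \<in> space M2"
  shows "(\<lambda>x. f x y :: real) \<in> borel_measurable M1"
  using measurable_compose[OF measurable_Pair2'[OF assms(2)] assms(1)] by simp

lemma avg01:
  fixes f :: "'a \<Rightarrow> real"
  assumes "prob_space M" "f \<in> borel_measurable M" "\<And>y. y \<in> space M \<Longrightarrow> 0 \<le> f y \<and> f y \<le> 1"
  shows "0 \<le> integral\<^sup>L M f \<and> integral\<^sup>L M f \<le> 1"
proof -
  interpret prob_space M by fact
  have i: "integrable M f" by (rule integrable_const_bound[where B=1]) (use assms in auto)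
  have "integral\<^sup>L M f \<le> integral\<^sup>L M (\<lambda>_. 1::real)"
    by (rule integral_mono) (use i assms in auto)
  moreover have "0 \<le> integral\<^sup>L M f" by (rule Bochner_Integration.integral_nonneg) (use assms in auto)
  ultimately show ?thesis by (simp add: prob_space)
qed

lemma abs3: "0 \<le> (a::real) \<Longrightarrow> a \<le> 1 \<Longrightarrow> 0 \<le> b \<Longrightarrow> b \<le> 1 \<Longrightarrow> 0 \<le> c \<Longrightarrow> c \<le> 1 \<Longrightarrow> \<bar>a * b * c\<bar> \<le> 1"
  by (simp add: abs_mult mult_le_one)

lemma kern01: "0 \<le> q \<Longrightarrow> q \<le> 1 \<Longrightarrow> 0 \<le> kern q a \<and> kern q a \<le> 1"
  by (auto simp: kern_def)

lemma sum3: "(\<Sum>a\<in>A. \<Sum>b\<in>B. \<Sum>c\<in>C. f a * (g b * h c)) = sum f A * sum g B * (sum h C :: real)"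
proof -
  have "sum f A * sum g B * sum h C = sum f A * (sum g B * sum h C)" by (simp add: mult.assoc)
  also have "\<dots> = sum f A * (\<Sum>b\<in>B. \<Sum>c\<in>C. g b * h c)" by (simp add: sum_product)
  also have "\<dots> = (\<Sum>a\<in>A. f a * (\<Sum>b\<in>B. \<Sum>c\<in>C. g b * h c))" by (rule sum_distrib_right)
  also have "\<dots> = (\<Sum>a\<in>A. \<Sum>b\<in>B. \<Sum>c\<in>C. f a * (g b * h c))" by (simp add: sum_distrib_left)
  finally show ?thesis by simp
qed

theorem mainTheorem10:
  fixes P :: "bool \<Rightarrow> bool \<Rightarrow> bool \<Rightarrow> real"
    and MX :: "'x measure" and MY :: "'y measure" and MZ :: "'z measure"
    and qA :: "'x \<Rightarrow> 'y \<Rightarrow> real" and qB :: "'x \<Rightarrow> 'z \<Rightarrow> real" and qC :: "'y \<Rightarrow> 'z \<Rightarrow> real"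
  assumes "triangle_model P MX MY MZ qA qB qC"
  shows "(\<Sum>b\<in>UNIV. \<Sum>c\<in>UNIV. P True b c) * (\<Sum>a\<in>UNIV. \<Sum>c\<in>UNIV. P a True c)
           * (\<Sum>a\<in>UNIV. \<Sum>b\<in>UNIV. P a b True)
         \<le> (\<Sum>c\<in>UNIV. P True True c) * (\<Sum>a\<in>UNIV. \<Sum>b\<in>UNIV. P a b True)
           + (\<Sum>a\<in>UNIV. P a True True) * (\<Sum>b\<in>UNIV. \<Sum>c\<in>UNIV. P True b c)
           + (\<Sum>b\<in>UNIV. P True b True) * (\<Sum>a\<in>UNIV. \<Sum>c\<in>UNIV. P a True c)
           + P False False False"
proof -
  note tm = assms[unfolded triangle_model_def]
  have X: "prob_space MX" and Y: "prob_space MY" and Z: "prob_space MZ" using tm by blast+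
  have hA: "(\<lambda>(x,y). qA x y) \<in> borel_measurable (MX \<Otimes>\<^sub>M MY)" using tm by blast
  have hB: "(\<lambda>(x,z). qB x z) \<in> borel_measurable (MX \<Otimes>\<^sub>M MZ)" using tm by blast
  have hC: "(\<lambda>(y,z). qC y z) \<in> borel_measurable (MY \<Otimes>\<^sub>M MZ)" using tm by blast
  have bA: "\<And>x y. x \<in> space MX \<Longrightarrow> y \<in> space MY \<Longrightarrow> 0 \<le> qA x y \<and> qA x y \<le> 1" using tm by blast
  have bB: "\<And>x z. x \<in> space MX \<Longrightarrow> z \<in> space MZ \<Longrightarrow> 0 \<le> qB x z \<and> qB x z \<le> 1" using tm by blast
  have bC: "\<And>y z. y \<in> space MY \<Longrightarrow> z \<in> space MZ \<Longrightarrow> 0 \<le> qC y z \<and> qC y z \<le> 1" using tm by blast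
  have Pd: "\<And>a b c. P a b c = (\<integral>w. kern (qA (fst w) (fst (snd w))) a * kern (qB (fst w) (snd (snd w))) b
                 * kern (qC (fst (snd w)) (snd (snd w))) c \<partial>(MX \<Otimes>\<^sub>M (MY \<Otimes>\<^sub>M MZ)))" using tm by blast
  interpret X: prob_space MX by fact
  interpret Y: prob_space MY by fact
  interpret Z: prob_space MZ by fact
  let ?O = "MX \<Otimes>\<^sub>M (MY \<Otimes>\<^sub>M MZ)"
  note IT = iter_lemmas[OF X Y Z]
  have spO: "\<And>w. w \<in> space ?O \<Longrightarrow> fst w \<in> space MX \<and> fst (snd w) \<in> space MY \<and> snd (snd w) \<in> space MZ"
    by (auto simp: space_pair_measure)
  have mA[measurable]: "(\<lambda>w. qA (fst w) (fst (snd w))) \<in> borel_measurable ?O"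
  proof -
    have g: "(\<lambda>w. (fst w, fst (snd w))) \<in> measurable ?O (MX \<Otimes>\<^sub>M MY)" by measurable
    show ?thesis using measurable_compose[OF g hA] by simp
  qed
  have mB[measurable]: "(\<lambda>w. qB (fst w) (snd (snd w))) \<in> borel_measurable ?O"
  proof -
    have g: "(\<lambda>w. (fst w, snd (snd w))) \<in> measurable ?O (MX \<Otimes>\<^sub>M MZ)" by measurable
    show ?thesis using measurable_compose[OF g hB] by simp
  qed
  have mC[measurable]: "(\<lambda>w. qC (fst (snd w)) (snd (snd w))) \<in> borel_measurable ?O"
  proof -
    have g: "(\<lambda>w. (fst (snd w), snd (snd w))) \<in> measurable ?O (MY \<Otimes>\<^sub>M MZ)" by measurable
    show ?thesis using measurable_compose[OF g hC] by (simp add: case_prod_unfold)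
  qed
  define abar where "abar = (\<lambda>x. \<integral>y. qA x y \<partial>MY)"
  define bbar where "bbar = (\<lambda>z. \<integral>x. qB x z \<partial>MX)"
  define cbar where "cbar = (\<lambda>y. \<integral>z. qC y z \<partial>MZ)"
  have ma[measurable]: "abar \<in> borel_measurable MX"
    unfolding abar_def by (rule Y.borel_measurable_lebesgue_integral) (use hA in simp)
  have mc[measurable]: "cbar \<in> borel_measurable MY"
    unfolding cbar_def by (rule Z.borel_measurable_lebesgue_integral) (use hC in simp)
  have mb[measurable]: "bbar \<in> borel_measurable MZ"
  proof -
    have g: "(\<lambda>p. (snd p, fst p)) \<in> measurable (MZ \<Otimes>\<^sub>M MX) (MX \<Otimes>\<^sub>M MZ)" by measurable
    have "(\<lambda>(z,x). qB x z) \<in> borel_measurable (MZ \<Otimes>\<^sub>M MX)"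
      using measurable_compose[OF g hB] by (simp add: case_prod_unfold)
    then show ?thesis
      unfolding bbar_def by (rule X.borel_measurable_lebesgue_integral)
  qed
  have a01: "\<And>x. x \<in> space MX \<Longrightarrow> 0 \<le> abar x \<and> abar x \<le> 1"
    unfolding abar_def by (rule avg01[OF Y sect1[OF hA]]) (meson bA)+
  have b01: "\<And>z. z \<in> space MZ \<Longrightarrow> 0 \<le> bbar z \<and> bbar z \<le> 1"
    unfolding bbar_def by (rule avg01[OF X sect2[OF hB]]) (meson bB)+
  have c01: "\<And>y. y \<in> space MY \<Longrightarrow> 0 \<le> cbar y \<and> cbar y \<le> 1"
    unfolding cbar_def by (rule avg01[OF Z sect1[OF hC]]) (meson bC)+
  have intK: "\<And>a b c. integrable ?O (\<lambda>w. kern (qA (fst w) (fst (snd w))) a * kern (qB (fst w) (snd (snd w))) b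
                 * kern (qC (fst (snd w)) (snd (snd w))) c)"
  proof -
    fix a b c
    show "integrable ?O (\<lambda>w. kern (qA (fst w) (fst (snd w))) a * kern (qB (fst w) (snd (snd w))) b
                 * kern (qC (fst (snd w)) (snd (snd w))) c)"
    proof (rule IT(1)[where B=1])
      show "(\<lambda>w. kern (qA (fst w) (fst (snd w))) a * kern (qB (fst w) (snd (snd w))) b
                 * kern (qC (fst (snd w)) (snd (snd w))) c) \<in> borel_measurable ?O"
        by (cases a; cases b; cases c) (simp_all add: kern_def)
      fix w assume "w \<in> space ?O"
      then show "\<bar>kern (qA (fst w) (fst (snd w))) a * kern (qB (fst w) (snd (snd w))) b
                 * kern (qC (fst (snd w)) (snd (snd w))) c\<bar> \<le> 1"
        using spO bA bB bC kern01 abs3 by meson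
    qed
  qed
  have Psum: "(\<Sum>a\<in>S1. \<Sum>b\<in>S2. \<Sum>c\<in>S3. P a b c) = integral\<^sup>L ?O (\<lambda>w. (\<Sum>a\<in>S1. kern (qA (fst w) (fst (snd w))) a)
      * (\<Sum>b\<in>S2. kern (qB (fst w) (snd (snd w))) b) * (\<Sum>c\<in>S3. kern (qC (fst (snd w)) (snd (snd w))) c))" (is "_ = ?R") for S1 S2 S3
  proof -
    have "(\<Sum>a\<in>S1. \<Sum>b\<in>S2. \<Sum>c\<in>S3. P a b c) = (\<Sum>a\<in>S1. \<Sum>b\<in>S2. \<integral>w. (\<Sum>c\<in>S3. kern (qA (fst w) (fst (snd w))) a * kern (qB (fst w) (snd (snd w))) b
                 * kern (qC (fst (snd w)) (snd (snd w))) c) \<partial>?O)"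
      unfolding Pd by (intro sum.cong refl Bochner_Integration.integral_sum[symmetric] intK)
    also have "\<dots> = (\<Sum>a\<in>S1. \<integral>w. (\<Sum>b\<in>S2. \<Sum>c\<in>S3. kern (qA (fst w) (fst (snd w))) a * kern (qB (fst w) (snd (snd w))) b
                 * kern (qC (fst (snd w)) (snd (snd w))) c) \<partial>?O)"
      by (intro sum.cong refl Bochner_Integration.integral_sum[symmetric] Bochner_Integration.integrable_sum intK)
    also have "\<dots> = (\<integral>w. (\<Sum>a\<in>S1. \<Sum>b\<in>S2. \<Sum>c\<in>S3. kern (qA (fst w) (fst (snd w))) a * kern (qB (fst w) (snd (snd w))) b
                 * kern (qC (fst (snd w)) (snd (snd w))) c) \<partial>?O)"
      by (intro sum.cong refl Bochner_Integration.integral_sum[symmetric] Bochner_Integration.integrable_sum intK)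
    also have "\<dots> = ?R"
      by (intro Bochner_Integration.integral_cong refl) (simp only: mult.assoc sum3)
    finally show ?thesis .
  qed
  have PA: "(\<Sum>b\<in>UNIV. \<Sum>c\<in>UNIV. P True b c) = integral\<^sup>L ?O (\<lambda>w. qA (fst w) (fst (snd w)))"
    using Psum[of UNIV UNIV "{True}"] by (simp add: kern_def UNIV_bool)
  have PB: "(\<Sum>a\<in>UNIV. \<Sum>c\<in>UNIV. P a True c) = integral\<^sup>L ?O (\<lambda>w. qB (fst w) (snd (snd w)))"
    using Psum[of UNIV "{True}" UNIV] by (simp add: kern_def UNIV_bool)
  have PC: "(\<Sum>a\<in>UNIV. \<Sum>b\<in>UNIV. P a b True) = integral\<^sup>L ?O (\<lambda>w. qC (fst (snd w)) (snd (snd w)))"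
    using Psum[of "{True}" UNIV UNIV] by (simp add: kern_def UNIV_bool)
  have PAB: "(\<Sum>c\<in>UNIV. P True True c) = integral\<^sup>L ?O (\<lambda>w. qA (fst w) (fst (snd w)) * qB (fst w) (snd (snd w)))"
    using Psum[of UNIV "{True}" "{True}"] by (simp add: kern_def UNIV_bool)
  have PBC: "(\<Sum>a\<in>UNIV. P a True True) = integral\<^sup>L ?O (\<lambda>w. qB (fst w) (snd (snd w)) * qC (fst (snd w)) (snd (snd w)))"
    using Psum[of "{True}" "{True}" UNIV] by (simp add: kern_def UNIV_bool)
  have PAC: "(\<Sum>b\<in>UNIV. P True b True) = integral\<^sup>L ?O (\<lambda>w. qA (fst w) (fst (snd w)) * qC (fst (snd w)) (snd (snd w)))"
    using Psum[of "{True}" UNIV "{True}"] by (simp add: kern_def UNIV_bool)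
  have P0: "P False False False = integral\<^sup>L ?O (\<lambda>w. (1 - qA (fst w) (fst (snd w))) * (1 - qB (fst w) (snd (snd w))) * (1 - qC (fst (snd w)) (snd (snd w))))"
    by (simp add: Pd kern_def)
  have vals: "0 \<le> qA (fst w) (fst (snd w)) \<and> qA (fst w) (fst (snd w)) \<le> 1 \<and>
     0 \<le> qB (fst w) (snd (snd w)) \<and> qB (fst w) (snd (snd w)) \<le> 1 \<and>
     0 \<le> qC (fst (snd w)) (snd (snd w)) \<and> qC (fst (snd w)) (snd (snd w)) \<le> 1 \<and>
     0 \<le> abar (fst w) \<and> abar (fst w) \<le> 1 \<and> 0 \<le> bbar (snd (snd w)) \<and> bbar (snd (snd w)) \<le> 1 \<and>
     0 \<le> cbar (fst (snd w)) \<and> cbar (fst (snd w)) \<le> 1" if "w \<in> space ?O" for w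
    using spO[OF that] bA bB bC a01 b01 c01 by blast
  have bnd: "\<bar>f w\<bar> \<le> 1" if "w \<in> space ?O" and
     "f w = qA (fst w) (fst (snd w)) \<or> f w = qB (fst w) (snd (snd w)) \<or> f w = qC (fst (snd w)) (snd (snd w)) \<or>
      f w = qA (fst w) (fst (snd w)) * qB (fst w) (snd (snd w)) \<or>
      f w = qB (fst w) (snd (snd w)) * qC (fst (snd w)) (snd (snd w)) \<or>
      f w = qA (fst w) (fst (snd w)) * qC (fst (snd w)) (snd (snd w)) \<or>
      f w = abar (fst w) * bbar (snd (snd w)) * cbar (fst (snd w)) \<or>
      f w = abar (fst w) * qB (fst w) (snd (snd w)) * cbar (fst (snd w)) \<or>
      f w = abar (fst w) * bbar (snd (snd w)) * qC (fst (snd w)) (snd (snd w)) \<or>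
      f w = qA (fst w) (fst (snd w)) * bbar (snd (snd w)) * cbar (fst (snd w)) \<or>
      f w = (1 - qA (fst w) (fst (snd w))) * (1 - qB (fst w) (snd (snd w))) * (1 - qC (fst (snd w)) (snd (snd w)))"
    for f w
    using vals[OF that(1)] that(2) by (auto simp: abs_mult mult_le_one)
  note IT2 = IT(2)[where B=1] and IT3 = IT(3)[where B=1] and IT1 = IT(1)[where B=1]
  have eA: "integral\<^sup>L ?O (\<lambda>w. qA (fst w) (fst (snd w))) = (\<integral>x. abar x \<partial>MX)"
    by (subst IT2) (auto intro: bnd simp: abar_def Z.prob_space)
  have eB: "integral\<^sup>L ?O (\<lambda>w. qB (fst w) (snd (snd w))) = (\<integral>z. bbar z \<partial>MZ)"
    by (subst IT3) (auto intro: bnd simp: bbar_def Y.prob_space)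
  have eC: "integral\<^sup>L ?O (\<lambda>w. qC (fst (snd w)) (snd (snd w))) = (\<integral>y. cbar y \<partial>MY)"
    by (subst IT2) (auto intro: bnd simp: cbar_def X.prob_space)
  have eAB: "integral\<^sup>L ?O (\<lambda>w. qA (fst w) (fst (snd w)) * qB (fst w) (snd (snd w)))
     = (\<integral>x. abar x * (\<integral>z. qB x z \<partial>MZ) \<partial>MX)"
    by (subst IT2) (auto intro: bnd simp: abar_def)
  have eBC: "integral\<^sup>L ?O (\<lambda>w. qB (fst w) (snd (snd w)) * qC (fst (snd w)) (snd (snd w)))
     = (\<integral>y. \<integral>z. bbar z * qC y z \<partial>MZ \<partial>MY)"
    by (subst IT3) (auto intro: bnd simp: bbar_def)
  have eAC: "integral\<^sup>L ?O (\<lambda>w. qA (fst w) (fst (snd w)) * qC (fst (snd w)) (snd (snd w)))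
     = (\<integral>x. \<integral>y. qA x y * cbar y \<partial>MY \<partial>MX)"
    by (subst IT2) (auto intro: bnd simp: cbar_def)
  have eL: "integral\<^sup>L ?O (\<lambda>w. abar (fst w) * bbar (snd (snd w)) * cbar (fst (snd w)))
     = (\<integral>x. abar x \<partial>MX) * (\<integral>z. bbar z \<partial>MZ) * (\<integral>y. cbar y \<partial>MY)"
    by (subst IT2) (auto intro: bnd)
  have e1: "integral\<^sup>L ?O (\<lambda>w. abar (fst w) * qB (fst w) (snd (snd w)) * cbar (fst (snd w)))
     = (\<integral>x. abar x * (\<integral>z. qB x z \<partial>MZ) \<partial>MX) * (\<integral>y. cbar y \<partial>MY)"
    by (subst IT2) (auto intro: bnd)
  have e2: "integral\<^sup>L ?O (\<lambda>w. abar (fst w) * bbar (snd (snd w)) * qC (fst (snd w)) (snd (snd w)))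
     = (\<integral>x. abar x \<partial>MX) * (\<integral>y. \<integral>z. bbar z * qC y z \<partial>MZ \<partial>MY)"
    by (subst IT3) (auto intro: bnd simp: mult.assoc)
  have e3: "integral\<^sup>L ?O (\<lambda>w. qA (fst w) (fst (snd w)) * bbar (snd (snd w)) * cbar (fst (snd w)))
     = (\<integral>z. bbar z \<partial>MZ) * (\<integral>x. \<integral>y. qA x y * cbar y \<partial>MY \<partial>MX)"
  proof -
    have "integral\<^sup>L ?O (\<lambda>w. qA (fst w) (fst (snd w)) * bbar (snd (snd w)) * cbar (fst (snd w)))
       = (\<integral>x. \<integral>y. qA x y * (\<integral>z. bbar z \<partial>MZ) * cbar y \<partial>MY \<partial>MX)"
      by (subst IT2) (auto intro: bnd)
    moreover have "\<And>x y c. qA x y * c * cbar y = c * (qA x y * cbar y)" by (simp add: algebra_simps)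
    ultimately show ?thesis by (simp only: integral_mult_right_zero)
  qed
  let ?FL = "\<lambda>w. abar (fst w) * bbar (snd (snd w)) * cbar (fst (snd w))"
  let ?F1 = "\<lambda>w. abar (fst w) * qB (fst w) (snd (snd w)) * cbar (fst (snd w))"
  let ?F2 = "\<lambda>w. abar (fst w) * bbar (snd (snd w)) * qC (fst (snd w)) (snd (snd w))"
  let ?F3 = "\<lambda>w. qA (fst w) (fst (snd w)) * bbar (snd (snd w)) * cbar (fst (snd w))"
  let ?F4 = "\<lambda>w. (1 - qA (fst w) (fst (snd w))) * (1 - qB (fst w) (snd (snd w))) * (1 - qC (fst (snd w)) (snd (snd w)))"
  have iL: "integrable ?O ?FL" by (rule IT1) (auto intro: bnd)
  have i1: "integrable ?O ?F1" by (rule IT1) (auto intro: bnd)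
  have i2: "integrable ?O ?F2" by (rule IT1) (auto intro: bnd)
  have i3: "integrable ?O ?F3" by (rule IT1) (auto intro: bnd)
  have i4: "integrable ?O ?F4" by (rule IT1) (auto intro: bnd)
  have "integral\<^sup>L ?O ?FL \<le> integral\<^sup>L ?O (\<lambda>w. ?F1 w + ?F2 w + ?F3 w + ?F4 w)"
  proof (rule integral_mono)
    show "integrable ?O (\<lambda>w. ?F1 w + ?F2 w + ?F3 w + ?F4 w)"
      using i1 i2 i3 i4 by (intro Bochner_Integration.integrable_add)
    fix w assume "w \<in> space ?O"
    from vals[OF this] show "?FL w \<le> ?F1 w + ?F2 w + ?F3 w + ?F4 w"
      by (intro key_ineq) auto
  qed (rule iL)
  also have "\<dots> = integral\<^sup>L ?O ?F1 + integral\<^sup>L ?O ?F2 + integral\<^sup>L ?O ?F3 + integral\<^sup>L ?O ?F4"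
    using i1 i2 i3 i4 by (simp add: Bochner_Integration.integral_add)
  finally have main: "integral\<^sup>L ?O ?FL \<le> integral\<^sup>L ?O ?F1 + integral\<^sup>L ?O ?F2 + integral\<^sup>L ?O ?F3 + integral\<^sup>L ?O ?F4" .
  show ?thesis unfolding PA PB PC PAB PBC PAC P0 eA eB eC eAB eBC eAC
    using main unfolding eL e1 e2 e3 by (simp add: algebra_simps)
qed

end
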